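(* Let $1\le r\le m\le n$ and $k\ge 1$. Let $Z_1\subseteq\mathcal Z^{m,n}_{r,k}$ be the closed subvariety of points at which all $x^{(0)}_{i,j}$ ($1\le i\le m$, $1\le j\le n$) vanish. If $k\le r$, then $Z_1$ is exactly the linear subspace $\{x^{(0)}_{i,j}=0 \ \forall i,j\}\cong\mathbf A^{mn(k-1)}$ (the coordinates of degrees $1,\dots,k-1$ being arbitrary). If $k>r$, then $Z_1\cong \mathcal Z^{m,n}_{r,k-r}\times\mathbf A^{mn(r-1)}$, via the map sending a point of $Z_1$ to the pair consisting of its coordinates $x^{(l)}_{i,j}$ with $1\le l\le k-r$ (regarded as the coordinates $x^{(l-1)}_{i,j}$ of a point of $\mathcal Z^{m,n}_{r,k-r}$) and its coordinates $x^{(l)}_{i,j}$ with $k-r<l\le k-1$.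
   Context: Let $F$ be an algebraically closed field. For integers $1\le r\le m\le n$ and $k\ge 1$, let $S=F[x^{(l)}_{i,j}:1\le i\le m,\ 1\le j\le n,\ 0\le l\le k-1]$, the coordinate ring of $\mathbf A^{mnk}_F$, and let $X(t)$ be the $m\times n$ matrix over $S[t]/(t^k)$ with $(i,j)$ entry $x_{i,j}(t)=\sum_{l=0}^{k-1}x^{(l)}_{i,j}t^l$. Every element of $S[t]/(t^k)$ is uniquely $\sum_{l=0}^{k-1}c_lt^l$ with $c_l\in S$ (its coefficient of $t^l$). $\mathcal I^{m,n}_{r,k}\subseteq S$ is the ideal generated by the coefficients of $t^l$, $0\le l\le k-1$, of all $r\times r$ minors of $X(t)$, and $\mathcal Z^{m,n}_{r,k}\subseteq\mathbf A^{mnk}_F$ is its zero set. The variable $x^{(l)}_{i,j}$ is said to have degree $l$. *)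

theory Defs
  imports "HOL-Computational_Algebra.Polynomial" "Jordan_Normal_Form.Determinant"
    "Jordan_Normal_Form.DL_Submatrix"
begin

text \<open>A point of the affine space A^{mnk} over F is a coordinate function
  x l i j = value of x^{(l)}_{i,j}, with indices 0 <= l < k, 0 <= i < m, 0 <= j < n
  (rows and columns are indexed from 0), all other values being 0.\<close>

definition jet_points :: "nat \<Rightarrow> nat \<Rightarrow> nat \<Rightarrow> (nat \<Rightarrow> nat \<Rightarrow> nat \<Rightarrow> 'a::zero) set" where
  "jet_points m n k = {x. \<forall>l i j. x l i j \<noteq> 0 \<longrightarrow> l < k \<and> i < m \<and> j < n}"

definition jet_matrix :: "nat \<Rightarrow> nat \<Rightarrow> nat \<Rightarrow> (nat \<Rightarrow> nat \<Rightarrow> nat \<Rightarrow> 'a::comm_ring_1) \<Rightarrow> 'a poly mat" where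
  "jet_matrix m n k x = mat m n (\<lambda>(i,j). \<Sum>l<k. monom (x l i j) l)"

text \<open>Since evaluation at a point is a ring
  homomorphism S[t]/(t^k) -> F[t]/(t^k), this coefficient evaluated at x is the
  coefficient of t^l (l<k) of the corresponding minor of jet_matrix.\<close>

definition jet_zero_set :: "nat \<Rightarrow> nat \<Rightarrow> nat \<Rightarrow> nat \<Rightarrow> (nat \<Rightarrow> nat \<Rightarrow> nat \<Rightarrow> 'a::comm_ring_1) set" where
  "jet_zero_set m n r k = {x \<in> jet_points m n k.
     \<forall>I J l. I \<subseteq> {..<m} \<longrightarrow> J \<subseteq> {..<n} \<longrightarrow> card I = r \<longrightarrow> card J = r \<longrightarrow> l < k \<longrightarrow>
       coeff (det (submatrix (jet_matrix m n k x) I J)) l = 0}"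

definition jet_Z1 :: "nat \<Rightarrow> nat \<Rightarrow> nat \<Rightarrow> nat \<Rightarrow> (nat \<Rightarrow> nat \<Rightarrow> nat \<Rightarrow> 'a::comm_ring_1) set" where
  "jet_Z1 m n r k = {x \<in> jet_zero_set m n r k. \<forall>i<m. \<forall>j<n. x 0 i j = 0}"

text \<open>Points with coordinates supported on degrees in a set L (e.g. A^{mn(r-1)}
  realized with degrees k-r < l <= k-1).\<close>

definition coord_space :: "nat \<Rightarrow> nat \<Rightarrow> nat set \<Rightarrow> (nat \<Rightarrow> nat \<Rightarrow> nat \<Rightarrow> 'a::zero) set" where
  "coord_space m n L = {y. \<forall>l i j. y l i j \<noteq> 0 \<longrightarrow> l \<in> L \<and> i < m \<and> j < n}"

definition Z1_split :: "nat \<Rightarrow> nat \<Rightarrow> (nat \<Rightarrow> nat \<Rightarrow> nat \<Rightarrow> 'a::zero)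
    \<Rightarrow> (nat \<Rightarrow> nat \<Rightarrow> nat \<Rightarrow> 'a) \<times> (nat \<Rightarrow> nat \<Rightarrow> nat \<Rightarrow> 'a)" where
  "Z1_split r k x =
    ((\<lambda>l i j. if l < k - r then x (Suc l) i j else 0),
     (\<lambda>l i j. if k - r < l \<and> l \<le> k - 1 then x l i j else 0))"

end

theory Submission imports Defs begin

lemma prod_dvd_diff:
  fixes d :: "'b::comm_ring_1"
  assumes "finite S" "\<forall>i\<in>S. d dvd f i - g i"
  shows "d dvd prod f S - prod g S"
  using assms
proof (induction S rule: finite_induct)
  case empty then show ?case by simp
next
  case (insert a S)
  have "prod f (insert a S) - prod g (insert a S) = f a * (prod f S - prod g S) + (f a - g a) * prod g S"
    using insert.hyps by (simp add: algebra_simps)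
  moreover have "d dvd f a * (prod f S - prod g S)" using insert by simp
  moreover have "d dvd (f a - g a) * prod g S" using insert by simp
  ultimately show ?case by simp
qed

lemma det_dvd_diff:
  fixes d :: "'b::comm_ring_1"
  assumes "A \<in> carrier_mat N N" "B \<in> carrier_mat N N"
    "\<forall>i<N. \<forall>j<N. d dvd A $$ (i,j) - B $$ (i,j)"
  shows "d dvd det A - det B"
proof -
  have "det A - det B = (\<Sum>p\<in>{p. p permutes {0..<N}}. signof p * ((\<Prod>i = 0..<N. A $$ (i, p i)) - (\<Prod>i = 0..<N. B $$ (i, p i))))"
    using assms(1,2) unfolding det_def by (simp add: sum_subtractf[symmetric] algebra_simps)
  also have "d dvd \<dots>"
  proof (rule dvd_sum)
    fix p assume "p \<in> {p. p permutes {0..<N}}"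
    then have "\<forall>i\<in>{0..<N}. p i < N" using permutes_in_image by fastforce
    then have "d dvd (\<Prod>i = 0..<N. A $$ (i, p i)) - (\<Prod>i = 0..<N. B $$ (i, p i))"
      using assms(3) by (intro prod_dvd_diff) auto
    then show "d dvd signof p * ((\<Prod>i = 0..<N. A $$ (i, p i)) - (\<Prod>i = 0..<N. B $$ (i, p i)))" by simp
  qed
  finally show ?thesis .
qed

lemma monom_dvd_coeff:
  fixes p q :: "'b::comm_ring_1 poly"
  assumes "monom 1 N dvd (p - q)" "s < N"
  shows "coeff p s = coeff q s"
proof -
  from assms obtain c where "p - q = monom 1 N * c" by (auto elim: dvdE)
  then have "coeff (p - q) s = 0" using assms(2) by (simp add: coeff_monom_mult)
  then show ?thesis by simp
qed

lemma trunc_dvd: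
  fixes a :: "nat \<Rightarrow> 'b::comm_ring_1"
  assumes "N \<le> K"
  shows "monom 1 N dvd (\<Sum>l<K. monom (a l) l) - (\<Sum>l<N. monom (a l) l)"
proof -
  have "{..<K} = {..<N} \<union> {N..<K}" using assms by auto
  then have "(\<Sum>l<K. monom (a l) l) = (\<Sum>l<N. monom (a l) l) + (\<Sum>l\<in>{N..<K}. monom (a l) l)"
    by (metis (no_types, lifting) finite_lessThan finite_atLeastLessThan sum.union_disjoint
        Int_emptyI lessThan_iff atLeastLessThan_iff not_le)
  moreover have "monom 1 N dvd (\<Sum>l\<in>{N..<K}. monom (a l) l)"
  proof (rule dvd_sum)
    fix l assume "l \<in> {N..<K}"
    then have "monom (a l) l = monom 1 N * monom (a l) (l - N)" by (simp add: mult_monom)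
    then show "monom 1 N dvd monom (a l) l" by simp
  qed
  ultimately show ?thesis by simp
qed

lemma monom_pow: "(monom (1::'b::comm_ring_1) 1) ^ r = monom 1 r"
  by (induction r) (simp_all add: mult_monom monom_0 one_pCons)

lemma card_sub: "I \<subseteq> {..<m} \<Longrightarrow> card {i. i < m \<and> i \<in> I} = card I"
  by (metis (mono_tags, lifting) Collect_cong lessThan_iff subset_eq Collect_mem_eq)

lemma key:
  fixes x y :: "nat \<Rightarrow> nat \<Rightarrow> nat \<Rightarrow> 'b::comm_ring_1"
  assumes "\<forall>i<m. \<forall>j<n. x 0 i j = 0"
    and "\<forall>l<k-r. \<forall>i<m. \<forall>j<n. y l i j = x (Suc l) i j"
    and "I \<subseteq> {..<m}" "J \<subseteq> {..<n}" "card I = r" "card J = r" "l < k" "1 \<le> r"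
  shows "coeff (det (submatrix (jet_matrix m n k x) I J)) l =
    (if l < r then 0 else coeff (det (submatrix (jet_matrix m n (k-r) y) I J)) (l-r))"
proof -
  define Y where "Y = mat m n (\<lambda>(i,j). \<Sum>l<k-1. monom (x (Suc l) i j) l)"
  have k: "k = Suc (k-1)" using assms(7) by simp
  have jm: "jet_matrix m n k x = monom 1 1 \<cdot>\<^sub>m Y"
  proof (rule eq_matI)
    fix i j assume ij: "i < dim_row (monom 1 1 \<cdot>\<^sub>m Y)" "j < dim_col (monom 1 1 \<cdot>\<^sub>m Y)"
    then have ij': "i < m" "j < n" by (auto simp: Y_def)
    have "(\<Sum>l<k. monom (x l i j) l) = (\<Sum>l<Suc (k-1). monom (x l i j) l)" using k by simp
    also have "\<dots> = monom (x 0 i j) 0 + (\<Sum>l<k-1. monom (x (Suc l) i j) (Suc l))"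
      by (rule sum.lessThan_Suc_shift)
    also have "\<dots> = monom 1 1 * (\<Sum>l<k-1. monom (x (Suc l) i j) l)"
      using assms(1) ij' by (simp add: sum_distrib_left mult_monom)
    finally show "jet_matrix m n k x $$ (i, j) = (monom 1 1 \<cdot>\<^sub>m Y) $$ (i, j)"
      using ij' ij by (simp add: jet_matrix_def Y_def)
  qed (auto simp: jet_matrix_def Y_def)
  have subsm: "submatrix (monom 1 1 \<cdot>\<^sub>m Y) I J = monom 1 1 \<cdot>\<^sub>m submatrix Y I J"
    by (rule eq_matI) (auto simp: submatrix_index dim_submatrix pick_le)
  have dims: "submatrix Y I J \<in> carrier_mat r r"
    using assms(3-6) by (auto simp: dim_submatrix Y_def card_sub)
  have d1: "det (submatrix (jet_matrix m n k x) I J) = monom 1 r * det (submatrix Y I J)"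
    unfolding jm subsm det_smult monom_pow using dims by simp
  define Z where "Z = jet_matrix m n (k-r) y"
  have dimsZ: "submatrix Z I J \<in> carrier_mat r r"
    using assms(3-6) by (auto simp: dim_submatrix Z_def jet_matrix_def card_sub)
  have dv: "monom 1 (k-r) dvd det (submatrix Y I J) - det (submatrix Z I J)"
  proof (rule det_dvd_diff[OF dims dimsZ], intro allI impI)
    fix i j assume ij: "i < r" "j < r"
    have pi: "pick I i < m" using ij assms(3) pick_le[of i m I] by (simp add: card_sub assms(5))
    have pj: "pick J j < n" using ij assms(4) pick_le[of j n J] by (simp add: card_sub assms(6))
    have "(\<Sum>l<k-r. monom (y l (pick I i) (pick J j)) l) = (\<Sum>l<k-r. monom (x (Suc l) (pick I i) (pick J j)) l)"
      using assms(2) pi pj by simp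
    moreover have "monom 1 (k-r) dvd (\<Sum>l<k-1. monom (x (Suc l) (pick I i) (pick J j)) l) - (\<Sum>l<k-r. monom (x (Suc l) (pick I i) (pick J j)) l)"
      using assms(8) by (intro trunc_dvd) simp
    ultimately show "monom 1 (k-r) dvd submatrix Y I J $$ (i, j) - submatrix Z I J $$ (i, j)"
      using ij pi pj assms(3-6)
      by (simp add: submatrix_index card_sub Y_def Z_def jet_matrix_def)
  qed
  show ?thesis
  proof (cases "l < r")
    case True then show ?thesis by (simp add: d1 coeff_monom_mult)
  next
    case False
    then have "l - r < k - r" using assms(7) by simp
    then show ?thesis using False monom_dvd_coeff[OF dv] by (simp add: d1 coeff_monom_mult Z_def)
  qed
qed


lemma jp_zero:
  assumes "x \<in> jet_points m n k" "\<forall>i<m. \<forall>j<n. x 0 i j = 0"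
  shows "x 0 i j = 0"
proof (cases "i < m \<and> j < n")
  case True then show ?thesis using assms(2) by blast
next
  case False then show ?thesis using assms(1) unfolding jet_points_def by blast
qed

theorem lemma2p1:
  fixes m n r k :: nat
  assumes alg_closed: "\<forall>p :: 'a::field poly. degree p \<ge> 1 \<longrightarrow> (\<exists>z. poly p z = 0)"
    and "1 \<le> r" "r \<le> m" "m \<le> n" "1 \<le> k"
  shows "(k \<le> r \<longrightarrow>
            (jet_Z1 m n r k :: (nat \<Rightarrow> nat \<Rightarrow> nat \<Rightarrow> 'a) set)
              = {x \<in> jet_points m n k. \<forall>i<m. \<forall>j<n. x 0 i j = 0})
       \<and> (k > r \<longrightarrow>
            bij_betw (Z1_split r k) (jet_Z1 m n r k :: (nat \<Rightarrow> nat \<Rightarrow> nat \<Rightarrow> 'a) set)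
              (jet_zero_set m n r (k - r) \<times> coord_space m n {k - r <.. k - 1}))"
proof (intro conjI impI)
  assume kr: "k \<le> r"
  show "(jet_Z1 m n r k :: (nat \<Rightarrow> nat \<Rightarrow> nat \<Rightarrow> 'a) set)
              = {x \<in> jet_points m n k. \<forall>i<m. \<forall>j<n. x 0 i j = 0}"
  proof (rule subset_antisym)
    show "(jet_Z1 m n r k :: (nat \<Rightarrow> nat \<Rightarrow> nat \<Rightarrow> 'a) set) \<subseteq> {x \<in> jet_points m n k. \<forall>i<m. \<forall>j<n. x 0 i j = 0}"
      unfolding jet_Z1_def jet_zero_set_def by blast
  next
    show "{x \<in> jet_points m n k. \<forall>i<m. \<forall>j<n. x 0 i j = 0} \<subseteq> (jet_Z1 m n r k :: (nat \<Rightarrow> nat \<Rightarrow> nat \<Rightarrow> 'a) set)"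
    proof
    fix x :: "nat \<Rightarrow> nat \<Rightarrow> nat \<Rightarrow> 'a"
    assume x: "x \<in> {x \<in> jet_points m n k. \<forall>i<m. \<forall>j<n. x 0 i j = 0}"
    have "coeff (det (submatrix (jet_matrix m n k x) I J)) l = 0"
      if "I \<subseteq> {..<m}" "J \<subseteq> {..<n}" "card I = r" "card J = r" "l < k" for I J l
    proof -
      have "coeff (det (submatrix (jet_matrix m n k x) I J)) l =
        (if l < r then 0 else coeff (det (submatrix (jet_matrix m n (k-r) (\<lambda>_ _ _. 0)) I J)) (l - r))"
        by (rule key) (use x that kr assms(2) in simp_all)
      then show ?thesis using that kr by simp
    qed
    then show "x \<in> jet_Z1 m n r k" using x unfolding jet_Z1_def jet_zero_set_def by blast
    qed
  qed
next
  assume kr: "r < k"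
  let ?f = "Z1_split r k :: (nat \<Rightarrow> nat \<Rightarrow> nat \<Rightarrow> 'a) \<Rightarrow> (nat \<Rightarrow> nat \<Rightarrow> nat \<Rightarrow> 'a) \<times> (nat \<Rightarrow> nat \<Rightarrow> nat \<Rightarrow> 'a)"
  show "bij_betw ?f (jet_Z1 m n r k)
              (jet_zero_set m n r (k - r) \<times> coord_space m n {k - r <.. k - 1})"
  proof (rule bij_betw_imageI)
    show "inj_on ?f (jet_Z1 m n r k)"
    proof (rule inj_onI)
      fix x y :: "nat \<Rightarrow> nat \<Rightarrow> nat \<Rightarrow> 'a"
      assume x: "x \<in> jet_Z1 m n r k" and y: "y \<in> jet_Z1 m n r k" and e: "?f x = ?f y"
      have xp: "x \<in> jet_points m n k" "\<forall>i<m. \<forall>j<n. x 0 i j = 0"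
        using x unfolding jet_Z1_def jet_zero_set_def by blast+
      have yp: "y \<in> jet_points m n k" "\<forall>i<m. \<forall>j<n. y 0 i j = 0"
        using y unfolding jet_Z1_def jet_zero_set_def by blast+
      have e1: "x (Suc l) i j = y (Suc l) i j" if "l < k - r" for l i j
      proof -
        have "fst (?f x) l i j = fst (?f y) l i j" using e by simp
        then show ?thesis using that by (simp add: Z1_split_def)
      qed
      have e2: "x l i j = y l i j" if "k - r < l" "l \<le> k - 1" for l i j
      proof -
        have "snd (?f x) l i j = snd (?f y) l i j" using e by simp
        then show ?thesis using that by (simp add: Z1_split_def)
      qed
      show "x = y"
      proof (intro ext)
        fix l i j
        show "x l i j = y l i j"
        proof (cases l)
          case 0 then show ?thesis using jp_zero[OF xp] jp_zero[OF yp] by simp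
        next
          case (Suc l')
          show ?thesis
          proof (cases "l' < k - r")
            case True then show ?thesis using e1 Suc by simp
          next
            case False
            show ?thesis
            proof (cases "l \<le> k - 1")
              case True then show ?thesis using e2 False Suc by simp
            next
              case False
              then have "\<not> l < k" using assms(5) by simp
              then have "x l i j = 0" "y l i j = 0" using xp(1) yp(1) unfolding jet_points_def
                by blast+
              then show ?thesis by simp
            qed
          qed
        qed
      qed
    qed
  next
    show "?f ` jet_Z1 m n r k = jet_zero_set m n r (k - r) \<times> coord_space m n {k - r <.. k - 1}"
    proof (intro equalityI subsetI)
      fix p :: "(nat \<Rightarrow> nat \<Rightarrow> nat \<Rightarrow> 'a) \<times> (nat \<Rightarrow> nat \<Rightarrow> nat \<Rightarrow> 'a)" assume "p \<in> ?f ` jet_Z1 m n r k"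
      then obtain x where x: "x \<in> jet_Z1 m n r k" and p: "p = ?f x" by blast
      have xZ0: "x \<in> jet_zero_set m n r k" and x0': "\<forall>i<m. \<forall>j<n. x 0 i j = 0"
        using x unfolding jet_Z1_def by simp_all
      have xp: "x \<in> jet_points m n k" "\<forall>i<m. \<forall>j<n. x 0 i j = 0"
        using xZ0 x0' unfolding jet_zero_set_def by simp_all
      have xz: "coeff (det (submatrix (jet_matrix m n k x) I J)) l = 0"
        if "I \<subseteq> {..<m}" "J \<subseteq> {..<n}" "card I = r" "card J = r" "l < k" for I J l
        using xZ0 that unfolding jet_zero_set_def by simp
      define y where "y = fst (?f x)"
      have yv: "y = (\<lambda>l i j. if l < k - r then x (Suc l) i j else 0)"
        unfolding y_def Z1_split_def by simp
      have yp: "y \<in> jet_points m n (k - r)"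
        using xp(1) unfolding yv jet_points_def by auto
      have "coeff (det (submatrix (jet_matrix m n (k - r) y) I J)) s = 0"
        if "I \<subseteq> {..<m}" "J \<subseteq> {..<n}" "card I = r" "card J = r" "s < k - r" for I J s
      proof -
        have "coeff (det (submatrix (jet_matrix m n k x) I J)) (s + r) =
          (if s + r < r then 0 else coeff (det (submatrix (jet_matrix m n (k-r) y) I J)) (s + r - r))"
          by (rule key) (use xp(2) that assms(2) in \<open>auto simp: yv\<close>)
        then show ?thesis using xz[OF that(1-4), of "s + r"] that(5) by simp
      qed
      then have "y \<in> jet_zero_set m n r (k - r)" using yp unfolding jet_zero_set_def by blast
      moreover have "snd (?f x) \<in> coord_space m n {k - r <.. k - 1}"
        using xp(1) unfolding Z1_split_def coord_space_def jet_points_def by auto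
      ultimately show "p \<in> jet_zero_set m n r (k - r) \<times> coord_space m n {k - r <.. k - 1}"
        unfolding p y_def by (simp add: mem_Times_iff)
    next
      fix p :: "(nat \<Rightarrow> nat \<Rightarrow> nat \<Rightarrow> 'a) \<times> (nat \<Rightarrow> nat \<Rightarrow> nat \<Rightarrow> 'a)" assume p: "p \<in> jet_zero_set m n r (k - r) \<times> coord_space m n {k - r <.. k - 1}"
      obtain y z where pyz: "p = (y, z)" by (cases p)
      have yZ: "y \<in> jet_zero_set m n r (k - r)" and zp: "z \<in> coord_space m n {k - r <.. k - 1}"
        using p unfolding pyz by simp_all
      have yp: "y \<in> jet_points m n (k - r)"
        using yZ unfolding jet_zero_set_def by simp
      have yz: "coeff (det (submatrix (jet_matrix m n (k - r) y) I J)) l = 0"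
        if "I \<subseteq> {..<m}" "J \<subseteq> {..<n}" "card I = r" "card J = r" "l < k - r" for I J l
        using yZ that unfolding jet_zero_set_def by simp
      define x :: "nat \<Rightarrow> nat \<Rightarrow> nat \<Rightarrow> 'a" where
        "x = (\<lambda>l i j. if l = 0 then 0 else if l \<le> k - r then y (l - 1) i j else z l i j)"
      have xp: "x \<in> jet_points m n k"
        unfolding jet_points_def
      proof (intro CollectI allI impI)
        fix l i j assume nz: "x l i j \<noteq> 0"
        show "l < k \<and> i < m \<and> j < n"
        proof (cases "l = 0")
          case True then show ?thesis using nz by (simp add: x_def)
        next
          case l0: False
          show ?thesis
          proof (cases "l \<le> k - r")
            case True
            then have "y (l - 1) i j \<noteq> 0" using nz l0 by (simp add: x_def)
            then have "i < m \<and> j < n" using yp unfolding jet_points_def by blast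
            moreover have "l < k" using True kr assms(2) by arith
            ultimately show ?thesis by simp
          next
            case False
            then have "z l i j \<noteq> 0" using nz l0 by (simp add: x_def)
            then have "l \<in> {k - r <.. k - 1} \<and> i < m \<and> j < n" using zp unfolding coord_space_def by blast
            moreover have "k - 1 < k" using assms(5) by simp
            ultimately show ?thesis by auto
          qed
        qed
      qed
      have x0: "\<forall>i<m. \<forall>j<n. x 0 i j = 0" by (simp add: x_def)
      have "coeff (det (submatrix (jet_matrix m n k x) I J)) l = 0"
        if "I \<subseteq> {..<m}" "J \<subseteq> {..<n}" "card I = r" "card J = r" "l < k" for I J l
      proof -
        have "coeff (det (submatrix (jet_matrix m n k x) I J)) l =
          (if l < r then 0 else coeff (det (submatrix (jet_matrix m n (k-r) y) I J)) (l - r))"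
          by (rule key) (use x0 that assms(2) in \<open>auto simp: x_def\<close>)
        then show ?thesis using yz[OF that(1-4), of "l - r"] that(5) by auto
      qed
      then have xZ: "x \<in> jet_Z1 m n r k" using xp x0 unfolding jet_Z1_def jet_zero_set_def by blast
      have "?f x = (y, z)"
      proof -
        have "(\<lambda>l i j. if l < k - r then x (Suc l) i j else 0) = y"
        proof (intro ext)
          fix l i j
          show "(if l < k - r then x (Suc l) i j else 0) = y l i j"
          proof (cases "l < k - r")
            case True then show ?thesis by (simp add: x_def)
          next
            case False then show ?thesis using yp unfolding jet_points_def by auto
          qed
        qed
        moreover have "(\<lambda>l i j. if k - r < l \<and> l \<le> k - 1 then x l i j else 0) = z"
        proof (intro ext)
          fix l i j
          show "(if k - r < l \<and> l \<le> k - 1 then x l i j else 0) = z l i j"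
          proof (cases "k - r < l \<and> l \<le> k - 1")
            case True then show ?thesis by (simp add: x_def)
          next
            case False
            then have "l \<notin> {k - r <.. k - 1}" by simp
            then show ?thesis using False zp unfolding coord_space_def by auto
          qed
        qed
        ultimately show ?thesis unfolding Z1_split_def by simp
      qed
      then show "p \<in> ?f ` jet_Z1 m n r k" unfolding pyz by (rule image_eqI[OF sym xZ])
    qed
  qed
qed

end
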